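(* Let $(X,T)$ be a topologically transitive topological dynamical system, where $X$ is totally disconnected, and suppose every nonempty open subset of $X$ has positive measure for at least one $T$-invariant Borel probability measure. If $p,q$ are relatively prime positive integers such that $\theta=p/q\in(0,1)$ and $\exp(2\pi i\theta)$ is a continuous eigenvalue of $T$, then there exists a clopen set $U\subseteq X$ such that $q[1_U]=p[1_X]$ in $K^0(X,T)$.
   Context: A topological dynamical system is a compact metric space $X$ with a homeomorphism $T$; topologically transitive means some orbit is dense. A continuous eigenvalue is $\lambda$ with $f\circ T=\lambda f$ for some continuous $f:X\to\mathbb S^1$. $K^0(X,T)=C(X,\mathbb Z)/\{f-f\circ T:f\in C(X,\mathbb Z)\}$, $[f]$ the class of $f$. *)

theory Defs
  imports "HOL-Analysis.Analysis" "HOL-Probability.Probability"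
begin

definition tds :: "'a::metric_space set \<Rightarrow> ('a \<Rightarrow> 'a) \<Rightarrow> bool" where
  "tds X T \<longleftrightarrow> compact X \<and> (\<exists>Tinv. homeomorphism X X T Tinv)"

definition orbit :: "'a::metric_space set \<Rightarrow> ('a \<Rightarrow> 'a) \<Rightarrow> 'a \<Rightarrow> 'a set" where
  "orbit X T x = {(T ^^ n) x | n. True} \<union>
     {((inv_into X T) ^^ n) x | n. True}"

definition top_transitive :: "'a::metric_space set \<Rightarrow> ('a \<Rightarrow> 'a) \<Rightarrow> bool" where
  "top_transitive X T \<longleftrightarrow> (\<exists>x\<in>X. X \<subseteq> closure (orbit X T x))"

definition totally_disconnected :: "'a::topological_space set \<Rightarrow> bool" where
  "totally_disconnected X \<longleftrightarrow> (\<forall>S. S \<subseteq> X \<and> connected S \<longrightarrow> (\<exists>a. S \<subseteq> {a}))"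

definition invariant_prob :: "'a::metric_space set \<Rightarrow> ('a \<Rightarrow> 'a) \<Rightarrow> 'a measure \<Rightarrow> bool" where
  "invariant_prob X T M \<longleftrightarrow> prob_space M \<and> space M = X \<and>
     sets M = sets (restrict_space borel X) \<and> T \<in> measurable M M \<and> distr M M T = M"

definition continuous_eigenvalue :: "'a::metric_space set \<Rightarrow> ('a \<Rightarrow> 'a) \<Rightarrow> complex \<Rightarrow> bool" where
  "continuous_eigenvalue X T lam \<longleftrightarrow>
     (\<exists>f :: 'a \<Rightarrow> complex. continuous_on X f \<and> f ` X \<subseteq> sphere 0 1 \<and>
        (\<forall>x\<in>X. f (T x) = lam * f x))"

text \<open>C(X,Z) and the class [f] in K^0(X,T) = C(X,Z) / {h - h o T}.\<close>
definition CXZ :: "'a::metric_space set \<Rightarrow> ('a \<Rightarrow> int) set" where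
  "CXZ X = {f. continuous_on X f}"

definition K0_class :: "'a::metric_space set \<Rightarrow> ('a \<Rightarrow> 'a) \<Rightarrow> ('a \<Rightarrow> int) \<Rightarrow> ('a \<Rightarrow> int) set" where
  "K0_class X T f = {g \<in> CXZ X. \<exists>h \<in> CXZ X. \<forall>x\<in>X. f x - g x = h x - h (T x)}"

definition clopen_in :: "'a::topological_space set \<Rightarrow> 'a set \<Rightarrow> bool" where
  "clopen_in X U \<longleftrightarrow> openin (top_of_set X) U \<and> closedin (top_of_set X) U"

end

theory Submission
  imports Defs
begin

lemma cont_int_diff:
  fixes a b :: "'a::topological_space \<Rightarrow> int"
  assumes "continuous_on S a" "continuous_on S b"
  shows "continuous_on S (\<lambda>x. a x - b x)"
proof -
  have "continuous_on S (\<lambda>x. a x + (-1) * b x)"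
    using assms by (intro continuous_intros) auto
  thus ?thesis by simp
qed

theorem mainTheorem7:
  fixes X :: "'a::metric_space set" and T :: "'a \<Rightarrow> 'a" and p q :: nat
  assumes "tds X T"
    and "top_transitive X T"
    and "totally_disconnected X"
    and "\<forall>V. openin (top_of_set X) V \<and> V \<noteq> {} \<longrightarrow>
           (\<exists>M. invariant_prob X T M \<and> emeasure M V > 0)"
    and "0 < p" and "0 < q" and "coprime p q" and "p < q"
    and "continuous_eigenvalue X T (exp (2 * pi * \<i> * of_real (real p / real q)))"
  shows "\<exists>U. U \<subseteq> X \<and> clopen_in X U \<and>
           K0_class X T (\<lambda>x. int q * indicator U x) = K0_class X T (\<lambda>x. int p)"
proof -
  define l where "l = exp (2 * pi * \<i> * of_real (real p / real q))"
  obtain f where fc: "continuous_on X f" and fs: "f ` X \<subseteq> sphere 0 1"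
    and fT: "\<forall>x\<in>X. f (T x) = l * f x"
    using assms(9) unfolding continuous_eigenvalue_def l_def by blast
  obtain Tinv where hom: "homeomorphism X X T Tinv" using assms(1) tds_def by blast
  have TXeq: "T ` X = X" using hom by (simp add: homeomorphism_def)
  have TX: "\<And>x. x\<in>X \<Longrightarrow> T x \<in> X" using TXeq by blast
  obtain x0 where x0: "x0 \<in> X" "X \<subseteq> closure (orbit X T x0)"
    using assms(2) top_transitive_def by blast
  have lpow: "\<And>n. l ^ n = 1 \<longleftrightarrow> q dvd n"
  proof -
    fix n
    have "l ^ n = exp (2 * complex_of_real pi * \<i> * complex_of_nat (n*p) / complex_of_nat q)"
      unfolding l_def exp_of_nat_mult[symmetric]
      by (rule arg_cong[where f=exp]) (simp add: field_simps)
    hence "l ^ n = 1 \<longleftrightarrow> q dvd n * p"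
      using complex_root_unity_eq_1[of q "n*p"] assms(6) by simp
    also have "\<dots> \<longleftrightarrow> q dvd n"
      using assms(7) by (metis coprime_commute coprime_dvd_mult_left_iff)
    finally show "l ^ n = 1 \<longleftrightarrow> q dvd n" .
  qed
  have lq: "l ^ q = 1" using lpow by simp
  have lnz: "l \<noteq> 0" unfolding l_def by simp
  have lmod: "\<And>n. l ^ n = l ^ (n mod q)"
  proof -
    fix n
    have "l ^ n = l ^ (q * (n div q) + n mod q)" by (metis div_mult_mod_eq mult.commute)
    also have "\<dots> = l ^ (n mod q)" by (simp only: power_add power_mult lq power_one mult_1)
    finally show "l ^ n = l ^ (n mod q)" .
  qed
  define c where "c = f x0"
  have fnz: "\<And>x. x\<in>X \<Longrightarrow> f x \<noteq> 0" using fs by fastforce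
  have gT: "\<And>x. x \<in> X \<Longrightarrow> f (T x) ^ q = f x ^ q"
    using fT by (simp add: power_mult_distrib lq)
  have fwd: "\<And>n. (T ^^ n) x0 \<in> X \<and> f ((T ^^ n) x0) ^ q = c ^ q"
  proof -
    fix n show "(T ^^ n) x0 \<in> X \<and> f ((T ^^ n) x0) ^ q = c ^ q"
      by (induction n) (auto simp: c_def x0 TX gT)
  qed
  have invX: "\<And>y. y \<in> X \<Longrightarrow> inv_into X T y \<in> X \<and> T (inv_into X T y) = y"
    using TXeq by (metis f_inv_into_f inv_into_into)
  have bwd: "\<And>n. (inv_into X T ^^ n) x0 \<in> X \<and> f ((inv_into X T ^^ n) x0) ^ q = c ^ q"
  proof -
    fix n show "(inv_into X T ^^ n) x0 \<in> X \<and> f ((inv_into X T ^^ n) x0) ^ q = c ^ q"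
    proof (induction n)
      case 0 thus ?case by (simp add: c_def x0)
    next
      case (Suc n)
      then show ?case using invX[of "(inv_into X T ^^ n) x0"] gT[of "inv_into X T ((inv_into X T ^^ n) x0)"]
        by auto
    qed
  qed
  have orbX: "orbit X T x0 \<subseteq> {x\<in>X. f x ^ q = c ^ q}"
    unfolding orbit_def using fwd bwd by auto
  have gc: "continuous_on X (\<lambda>x. f x ^ q)" using fc by (intro continuous_intros)
  obtain C where C: "closed C" "{x\<in>X. f x ^ q = c ^ q} = X \<inter> C"
    using continuous_closedin_preimage_constant[OF gc, of "c^q"] by (auto simp: closedin_closed)
  have "closure (orbit X T x0) \<subseteq> C" using orbX C by (intro closure_minimal) auto
  hence gconst: "\<And>x. x\<in>X \<Longrightarrow> f x ^ q = c ^ q" using x0 C by blast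
  have cnz: "c \<noteq> 0" using fnz x0 c_def by simp
  define r where "r x = f x / c" for x
  have rq: "\<And>x. x\<in>X \<Longrightarrow> r x ^ q = 1" using gconst cnz by (simp add: r_def power_divide)
  have rT: "\<And>x. x\<in>X \<Longrightarrow> r (T x) = l * r x" using fT by (simp add: r_def)
  have rc: "continuous_on X r" unfolding r_def using fc cnz by (intro continuous_intros) auto
  define R where "R = {z::complex. z^q = 1}"
  have cardR: "card R = q" unfolding R_def using card_roots_unity_eq assms(6) by blast
  hence Rfin: "finite R" using assms(6) card_ge_0_finite by auto
  have linj: "inj_on (\<lambda>j. l^j) {..<q}"
  proof (rule inj_onI)
    have key: "\<And>i j. i < q \<Longrightarrow> j < q \<Longrightarrow> i \<le> j \<Longrightarrow> l^i = l^j \<Longrightarrow> i = j"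
    proof -
      fix i j assume ij: "i < q" "j < q" "i \<le> j" "l^i = l^j"
      have "l^j = l^i * l^(j-i)" using ij(3) by (simp flip: power_add)
      hence "l^(j-i) = 1" using ij(4) lnz by simp
      hence "q dvd j - i" using lpow by blast
      thus "i = j" using ij by (metis diff_less_mono dvd_imp_le le_antisym less_imp_diff_less
          diff_le_self neq0_conv not_le zero_less_diff)
    qed
    fix i j assume "i \<in> {..<q}" "j \<in> {..<q}" "l^i = l^j"
    thus "i = j" using key[of i j] key[of j i] by (cases "i \<le> j") auto
  qed
  have Req: "R = (\<lambda>j. l^j) ` {..<q}"
  proof (rule sym, rule card_subset_eq[OF Rfin])
    show "(\<lambda>j. l^j) ` {..<q} \<subseteq> R" unfolding R_def
      by (auto simp: lq simp flip: power_mult mult.commute[of _ q])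
      (metis lq power_mult power_one mult.commute)
    show "card ((\<lambda>j. l^j) ` {..<q}) = card R" using linj cardR card_image by fastforce
  qed
  define M where "M z = (THE j. j < q \<and> z = l^j)" for z
  have Mu: "\<And>j. j < q \<Longrightarrow> M (l^j) = j"
  proof -
    fix j assume j: "j < q"
    show "M (l^j) = j" unfolding M_def
    proof (rule the_equality)
      show "j < q \<and> l^j = l^j" using j by simp
      fix k assume "k < q \<and> l^j = l^k"
      thus "k = j" using linj j by (auto simp: inj_on_def)
    qed
  qed
  have M: "\<And>z. z \<in> R \<Longrightarrow> M z < q \<and> z = l ^ M z"
    using Req Mu by auto
  have rR: "\<And>x. x \<in> X \<Longrightarrow> r x \<in> R" using rq R_def by simp
  have MT: "\<And>x. x\<in>X \<Longrightarrow> M (r (T x)) = (M (r x) + 1) mod q"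
  proof -
    fix x assume x: "x \<in> X"
    have "r (T x) = l * l ^ M (r x)" using rT[OF x] M[OF rR[OF x]] by simp
    also have "\<dots> = l ^ ((M (r x) + 1) mod q)" using lmod by simp
    finally show "M (r (T x)) = (M (r x) + 1) mod q" using Mu assms(6) by simp
  qed
  have contG: "\<And>G :: complex \<Rightarrow> 'b::topological_space. continuous_on X (\<lambda>x. G (r x))"
    by (rule continuous_on_compose2[OF continuous_on_finite[OF Rfin] rc]) (use rR in auto)
  define U where "U = {x\<in>X. M (r x) < p}"
  define H where "H m = int p * int m - int q * int (min m p)" for m
  define h where "h x = H (M (r x))" for x
  have hc: "continuous_on X h" unfolding h_def by (rule contG)
  have indc: "continuous_on X (\<lambda>x. int q * indicator U x)"
    by (rule continuous_on_cong[THEN iffD1, OF refl _ contG[of "\<lambda>z. if M z < p then int q else 0"]])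
      (auto simp: U_def indicator_def)
  have constc: "continuous_on X (\<lambda>x. int p)" by simp
  have eqn: "\<And>x. x\<in>X \<Longrightarrow> int q * indicator U x - int p = h x - h (T x)"
  proof -
    fix x assume x: "x \<in> X"
    define m where "m = M (r x)"
    have mq: "m < q" using M rR x m_def by blast
    show "int q * indicator U x - int p = h x - h (T x)"
    proof (cases "m + 1 < q")
      case True
      hence "M (r (T x)) = m + 1" using MT x m_def by simp
      thus ?thesis using x True unfolding h_def U_def H_def
        by (auto simp: indicator_def min_def algebra_simps m_def[symmetric])
    next
      case False
      hence m1: "m = q - 1" using mq by simp
      hence "M (r (T x)) = 0" using MT x m_def assms(6) by simp
      thus ?thesis using x m1 assms(8) unfolding h_def U_def H_def
        by (auto simp: indicator_def min_def algebra_simps of_nat_diff m_def[symmetric])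
    qed
  qed
  have K0: "K0_class X T (\<lambda>x. int q * indicator U x) = K0_class X T (\<lambda>x. int p)"
  proof (rule set_eqI)
    fix g
    show "g \<in> K0_class X T (\<lambda>x. int q * indicator U x) \<longleftrightarrow> g \<in> K0_class X T (\<lambda>x. int p)"
    proof
      assume "g \<in> K0_class X T (\<lambda>x. int q * indicator U x)"
      then obtain k where g: "g \<in> CXZ X" and k: "k \<in> CXZ X"
        "\<forall>x\<in>X. int q * indicator U x - g x = k x - k (T x)"
        unfolding K0_class_def by blast
      have "(\<lambda>x. k x - h x) \<in> CXZ X" using k hc unfolding CXZ_def by (auto intro: cont_int_diff)
      moreover have "\<forall>x\<in>X. int p - g x = (k x - h x) - (k (T x) - h (T x))"
        using k(2) eqn by (smt (verit))
      ultimately show "g \<in> K0_class X T (\<lambda>x. int p)" using g unfolding K0_class_def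
        by (intro CollectI conjI bexI[where x="\<lambda>x. k x - h x"]) simp_all
    next
      assume "g \<in> K0_class X T (\<lambda>x. int p)"
      then obtain k where g: "g \<in> CXZ X" and k: "k \<in> CXZ X"
        "\<forall>x\<in>X. int p - g x = k x - k (T x)"
        unfolding K0_class_def by blast
      have "(\<lambda>x. k x - (0 - h x)) \<in> CXZ X" using k hc unfolding CXZ_def
        by (auto intro!: continuous_intros)
      moreover have "\<forall>x\<in>X. int q * indicator U x - g x = (k x - (0 - h x)) - (k (T x) - (0 - h (T x)))"
        using k(2) eqn by (smt (verit))
      ultimately show "g \<in> K0_class X T (\<lambda>x. int q * indicator U x)" using g unfolding K0_class_def
        by (intro CollectI conjI bexI[where x="\<lambda>x. k x - (0 - h x)"]) simp_all
    qed
  qed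
  define \<phi> where "\<phi> x = (if M (r x) < p then 1 else 0::real)" for x
  have \<phi>c: "continuous_on X \<phi>" unfolding \<phi>_def by (rule contG)
  have U1: "U = {x\<in>X. \<phi> x = 1}" by (auto simp: U_def \<phi>_def)
  have U0: "U = X - {x\<in>X. \<phi> x = 0}" by (auto simp: U_def \<phi>_def)
  have "clopen_in X U" unfolding clopen_in_def
    using continuous_closedin_preimage_constant[OF \<phi>c] U1 U0
    by (metis openin_diff openin_topspace topspace_euclidean_subtopology)
  moreover have "U \<subseteq> X" by (auto simp: U_def)
  ultimately show ?thesis using K0 by blast
qed

end
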